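(* The Vitali equivalence relation $E_V$ on $\mathbb{R}$ is closed graphable with diameter $2$.
   Context: $xE_Vy$ iff $x-y\in\mathbb{Q}$. $E$ is closed graphable with diameter $k$ if there is a simple undirected graph $G\subseteq\mathbb{R}\times\mathbb{R}$, closed in $\mathbb{R}^2$, whose connectedness relation equals $E$ and $k$ is the least integer such that any two $G$-connected points are joined by a path of length at most $k$. *)

theory Defs
  imports "HOL-Analysis.Analysis"
begin

definition vitali_rel :: "real \<Rightarrow> real \<Rightarrow> bool" where
  "vitali_rel x y \<longleftrightarrow> x - y \<in> \<rat>"

definition simple_graph :: "(real \<times> real) set \<Rightarrow> bool" where
  "simple_graph G \<longleftrightarrow> (\<forall>x y. (x, y) \<in> G \<longrightarrow> (y, x) \<in> G) \<and> (\<forall>x. (x, x) \<notin> G)"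

definition path_le :: "(real \<times> real) set \<Rightarrow> nat \<Rightarrow> real \<Rightarrow> real \<Rightarrow> bool" where
  "path_le G n x y \<longleftrightarrow> (\<exists>m\<le>n. (x, y) \<in> G ^^ m)"

definition graph_diameter :: "(real \<times> real) set \<Rightarrow> nat \<Rightarrow> bool" where
  "graph_diameter G k \<longleftrightarrow>
     (\<forall>x y. (x, y) \<in> G\<^sup>* \<longrightarrow> path_le G k x y) \<and>
     (\<forall>j. (\<forall>x y. (x, y) \<in> G\<^sup>* \<longrightarrow> path_le G j x y) \<longrightarrow> k \<le> j)"

definition closed_graphable_diam :: "(real \<Rightarrow> real \<Rightarrow> bool) \<Rightarrow> nat \<Rightarrow> bool" where
  "closed_graphable_diam E k \<longleftrightarrow>
     (\<exists>G. simple_graph G \<and> closed G \<and> (\<forall>x y. E x y \<longleftrightarrow> (x, y) \<in> G\<^sup>*) \<and> graph_diameter G k)"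

end

theory Submission
  imports Defs
begin

definition vL :: "int \<Rightarrow> nat \<Rightarrow> (real \<times> real) set" where
  "vL p n = {z. snd z - fst z = of_int p / real n \<and> real n \<le> \<bar>fst z\<bar> + \<bar>snd z\<bar>}"

definition vG :: "(real \<times> real) set" where
  "vG = {(x,y). \<exists>n p. n \<ge> 1 \<and> p \<noteq> 0 \<and> (x,y) \<in> vL p n}"

lemma vL_closed: "closed (vL p n)"
  unfolding vL_def
  by (intro closed_Collect_conj closed_Collect_eq closed_Collect_le continuous_intros)

lemma vG_closed: "closed vG"
proof -
  have "open (- vG)"
  proof (subst open_subopen, intro ballI)
    fix w assume w: "w \<in> - vG"
    obtain a b where ab: "w = (a,b)" by fastforce
    define M :: nat where "M = nat (ceiling (\<bar>a\<bar>+\<bar>b\<bar>)) + 1"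
    have aM: "\<bar>a\<bar>+\<bar>b\<bar> < real M" unfolding M_def by linarith
    define K :: int where "K = int (M*M)"
    define I where "I = ({-K..K} - {0}) \<times> {1..M}"
    define F where "F = (\<Union>i\<in>I. vL (fst i) (snd i))"
    have "finite I" unfolding I_def by auto
    hence cF: "closed F" unfolding F_def using vL_closed by (intro closed_UN) auto
    have FG: "F \<subseteq> vG" unfolding F_def I_def vG_def by fastforce
    define T where "T = {z. \<bar>fst z\<bar> + \<bar>snd z\<bar> < real M} - F"
    have oT: "open T" unfolding T_def
      by (intro open_Diff cF open_Collect_less continuous_intros)
    have wT: "w \<in> T" unfolding T_def using aM w FG ab by auto
    have "T \<subseteq> - vG"
    proof
      fix z assume zT: "z \<in> T"
      show "z \<in> - vG"
      proof
        assume "z \<in> vG"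
        then obtain n p where np: "n \<ge> 1" "p \<noteq> 0" "z \<in> vL p n"
          unfolding vG_def by auto
        have zl: "\<bar>fst z\<bar> + \<bar>snd z\<bar> < real M" using zT unfolding T_def by auto
        have e1: "snd z - fst z = of_int p / real n" and e2: "real n \<le> \<bar>fst z\<bar> + \<bar>snd z\<bar>"
          using np(3) unfolding vL_def by auto
        have nM: "n \<le> M" using e2 zl by linarith
        have "of_int p = real n * (snd z - fst z)" using e1 np(1) by simp
        hence "\<bar>of_int p\<bar> = real n * \<bar>snd z - fst z\<bar>" by (simp add: abs_mult)
        also have "\<dots> \<le> real M * real M"
          by (intro mult_mono) (use nM zl in auto)
        finally have "real_of_int \<bar>p\<bar> \<le> real_of_int K" unfolding K_def by simp
        hence "\<bar>p\<bar> \<le> K" by (simp only: of_int_le_iff)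
        hence "(p,n) \<in> I" unfolding I_def using np nM by auto
        hence "z \<in> F" unfolding F_def using np by force
        thus False using zT unfolding T_def by auto
      qed
    qed
    thus "\<exists>T. open T \<and> w \<in> T \<and> T \<subseteq> - vG" using oT wT by blast
  qed
  thus ?thesis by (simp add: closed_open)
qed

lemma vG_sym: "(x,y) \<in> vG \<Longrightarrow> (y,x) \<in> vG"
proof -
  assume "(x,y) \<in> vG"
  then obtain n p where np: "n \<ge> 1" "p \<noteq> 0" "y - x = of_int p / real n" "real n \<le> \<bar>x\<bar> + \<bar>y\<bar>"
    unfolding vG_def vL_def by auto
  have "x - y = of_int (-p) / real n" using np(3) by simp
  thus ?thesis unfolding vG_def vL_def using np by (intro CollectI case_prodI exI[of _ n] exI[of _ "-p"]) auto
qed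

lemma vG_irr: "(x,x) \<notin> vG"
  unfolding vG_def vL_def by auto

lemma vG_rat: "(x,y) \<in> vG \<Longrightarrow> y - x \<in> \<rat>"
  unfolding vG_def vL_def by auto

lemma vG_rtr: "(x,y) \<in> vG\<^sup>* \<Longrightarrow> y - x \<in> \<rat>"
proof (induction rule: rtrancl_induct)
  case base thus ?case by simp
next
  case (step y z)
  have "z - x = (z - y) + (y - x)" by simp
  thus ?case using step vG_rat by (metis Rats_add)
qed

lemma vG_two: assumes "y - x \<in> \<rat>" "x \<noteq> y" shows "(x,y) \<in> vG ^^ 2"
proof -
  obtain p b :: int where pb: "b > 0" "y - x = of_int p / of_int b"
    using Rats_cases'[OF assms(1)] by blast
  define n where "n = nat b"
  have pn: "n > 0" "y - x = of_int p / real n" using pb unfolding n_def by auto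
  define k :: nat where "k = nat (ceiling (\<bar>x\<bar>+\<bar>y\<bar>)) + n + 1"
  have kb: "real k > \<bar>x\<bar>+\<bar>y\<bar> + n" unfolding k_def by linarith
  define z where "z = x + real k"
  have "(x,z) \<in> vG"
  proof -
    have k0: "int k \<noteq> 0" using kb by auto
    have "(x,z) \<in> vL (int k) 1" unfolding vL_def z_def using kb pn(1) by (simp; linarith)
    thus ?thesis unfolding vG_def using k0 by blast
  qed
  moreover have "(z,y) \<in> vG"
  proof -
    have "y - z = of_int (p - int k * int n) / real n"
      using pn unfolding z_def by (simp add: field_simps)
    moreover have "p - int k * int n \<noteq> 0"
    proof
      assume "p - int k * int n = 0"
      hence "of_int p / real n = real k" using pn(1) by (simp add: field_simps)
      hence "y - x = real k" using pn by simp
      thus False using kb by linarith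
    qed
    moreover have "real n \<le> \<bar>z\<bar> + \<bar>y\<bar>" unfolding z_def using kb by linarith
    ultimately show ?thesis unfolding vG_def vL_def using pn(1)
      by (intro CollectI case_prodI exI[of _ n] exI[of _ "p - int k * int n"]) auto
  qed
  ultimately show ?thesis by (auto simp: numeral_2_eq_2 relcomp.simps)
qed

theorem proposition3p9:
  shows "closed_graphable_diam vitali_rel 2"
  unfolding closed_graphable_diam_def
proof (intro exI[of _ vG] conjI allI)
  show "simple_graph vG" unfolding simple_graph_def using vG_sym vG_irr by blast
  show "closed vG" by (rule vG_closed)
  have rel: "vitali_rel x y \<longleftrightarrow> (x,y) \<in> vG\<^sup>*" for x y
  proof
    assume "vitali_rel x y"
    hence "y - x \<in> \<rat>" unfolding vitali_rel_def by (metis Rats_minus_iff minus_diff_eq)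
    thus "(x,y) \<in> vG\<^sup>*"
      using vG_two[of y x] by (cases "x = y") (auto intro: relpow_imp_rtrancl)
  next
    assume "(x,y) \<in> vG\<^sup>*"
    hence "y - x \<in> \<rat>" by (rule vG_rtr)
    thus "vitali_rel x y" unfolding vitali_rel_def by (metis Rats_minus_iff minus_diff_eq)
  qed
  fix x y show "vitali_rel x y \<longleftrightarrow> (x,y) \<in> vG\<^sup>*" by (rule rel)
next
  have pl: "path_le vG 2 x y" if "(x,y) \<in> vG\<^sup>*" for x y
  proof (cases "x = y")
    case True thus ?thesis unfolding path_le_def by (intro exI[of _ 0]) auto
  next
    case False
    thus ?thesis using vG_two[OF vG_rtr[OF that]] unfolding path_le_def by blast
  qed
  have half: "(0, 1/2) \<in> vG\<^sup>*"
    using vG_two[of "1/2" 0] by (auto intro: relpow_imp_rtrancl)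
  have nh: "\<not> path_le vG 1 0 (1/2)"
  proof
    assume "path_le vG 1 0 (1/2)"
    then obtain m where "m \<le> 1" "(0::real, 1/2::real) \<in> vG ^^ m" unfolding path_le_def by auto
    hence "(0::real, 1/2::real) \<in> vG" by (cases m) auto
    then obtain n :: nat where "n \<ge> 1" "real n \<le> 1/2" unfolding vG_def vL_def by auto
    thus False by simp
  qed
  show "graph_diameter vG 2" unfolding graph_diameter_def
  proof (intro conjI allI impI)
    fix x y assume "(x,y) \<in> vG\<^sup>*" thus "path_le vG 2 x y" by (rule pl)
  next
    fix j assume h: "\<forall>x y. (x, y) \<in> vG\<^sup>* \<longrightarrow> path_le vG j x y"
    show "2 \<le> j"
    proof (rule ccontr)
      assume "\<not> 2 \<le> j"
      hence "j \<le> 1" by simp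
      moreover have "path_le vG j 0 (1/2)" using h half by blast
      ultimately have "path_le vG 1 0 (1/2)" unfolding path_le_def by (meson order_trans)
      thus False using nh by blast
    qed
  qed
qed

end
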